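(* Let $N\ge 3$ and define, for a function $V$ of $s>0$, $$\mathcal{L}V:=(5-N)V_s s^2+\tfrac12 V_s-V_sVs^2-2(N-2)Vs+(N-2)V^2s.$$ For every $m>0$ there exists $L_m>0$ such that the problem $\mathcal{L}\tilde V=0$ for $s>0$, $\tilde V(0)=m$, admits a unique classical solution $\tilde V\in C^2([0,L_m])$, and this solution satisfies $\tilde V_s(0)=0$ and $(2-m)\tilde V_{ss}(s)\ge (N-2)m(2-m)^2$ for $s\in[0,L_m]$. *)

theory Defs
  imports "HOL-Analysis.Analysis"
begin

definition C2_on :: "real \<Rightarrow> (real \<Rightarrow> real) \<Rightarrow> (real \<Rightarrow> real) \<Rightarrow> (real \<Rightarrow> real) \<Rightarrow> bool" where
  "C2_on L V V1 V2 \<longleftrightarrow>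
     (\<forall>s\<in>{0..L}. (V has_real_derivative V1 s) (at s within {0..L})
                 \<and> (V1 has_real_derivative V2 s) (at s within {0..L}))
     \<and> continuous_on {0..L} V2"

definition opL :: "nat \<Rightarrow> (real \<Rightarrow> real) \<Rightarrow> (real \<Rightarrow> real) \<Rightarrow> real \<Rightarrow> real" where
  "opL N V V1 s = (5 - real N) * V1 s * s^2 + 1/2 * V1 s - V1 s * V s * s^2
                  - 2 * (real N - 2) * V s * s + (real N - 2) * (V s)^2 * s"

definition is_sol :: "nat \<Rightarrow> real \<Rightarrow> real \<Rightarrow> (real \<Rightarrow> real) \<Rightarrow> (real \<Rightarrow> real) \<Rightarrow> (real \<Rightarrow> real) \<Rightarrow> bool" where
  "is_sol N m L V V1 V2 \<longleftrightarrow> C2_on L V V1 V2 \<and> V 0 = m \<and> (\<forall>s\<in>{0<..L}. opL N V V1 s = 0)"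

end

theory Submission
  imports Defs
begin


definition Dd :: "real \<Rightarrow> real \<Rightarrow> real \<Rightarrow> real" where
  "Dd a s v = 1/2 + (3 - a) * s^2 - v * s^2"

definition Ff :: "real \<Rightarrow> real \<Rightarrow> real \<Rightarrow> real" where
  "Ff a s v = a * s * v * (2 - v) / Dd a s v"

lemma antideriv:
  assumes "continuous_on {c..d} f"
  shows "\<exists>G. \<forall>x\<in>{c..d}. (G has_real_derivative f x) (at x within {c..d})"
  using integral_has_real_derivative[OF assms] by blast

lemma exist_ne2:
  fixes a m :: real
  assumes a: "a > 0" and m: "m > 0" "m \<noteq> 2"
  shows "\<exists>\<rho>>0. \<exists>V. V 0 = m \<and> (\<forall>s. \<bar>s\<bar> < \<rho> \<longrightarrow>
            (V has_real_derivative Ff a s (V s)) (at s) \<and> Dd a s (V s) \<noteq> 0)"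
proof -
  define r where "r = min m \<bar>2 - m\<bar> / 2"
  have r: "r > 0" using m by (auto simp: r_def)
  define c where "c = m - r"
  define d where "d = m + r"
  have cd: "c < m" "m < d" using r by (auto simp: c_def d_def)
  have inJ: "w > 0 \<and> w \<noteq> 2" if "w \<in> {c..d}" for w
  proof -
    have "r \<le> m/2" "r \<le> \<bar>2-m\<bar>/2" by (auto simp: r_def)
    moreover have "m - r \<le> w" "w \<le> m + r" using that by (auto simp: c_def d_def)
    ultimately show ?thesis using m by (auto simp: abs_if split: if_splits)
  qed
  have nz: "a * w * (2 - w) \<noteq> 0" if "w \<in> {c..d}" for w
    using inJ[OF that] a by auto
  define p where "p w = (6 - 2*a - 2*w) / (a * w * (2 - w))" for w
  define h where "h w = 1 / (a * w * (2 - w))" for w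
  have pc: "continuous_on {c..d} p" unfolding p_def
    by (intro continuous_intros) (use nz in auto)
  have hc: "continuous_on {c..d} h" unfolding h_def
    by (intro continuous_intros) (use nz in auto)
  obtain P where P: "\<And>x. x\<in>{c..d} \<Longrightarrow> (P has_real_derivative p x) (at x within {c..d})"
    using antideriv[OF pc] by blast
  have Pc: "continuous_on {c..d} P" using P by (rule DERIV_continuous_on)
  define q where "q w = exp (- P w) * h w" for w
  have qc: "continuous_on {c..d} q" unfolding q_def
    by (intro continuous_intros Pc hc)
  obtain Q where Q: "\<And>x. x\<in>{c..d} \<Longrightarrow> (Q has_real_derivative q x) (at x within {c..d})"
    using antideriv[OF qc] by blast
  define u where "u w = (Q w - Q m) * exp (P w)" for w
  define u1 where "u1 w = h w + p w * u w" for w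
  have uder: "(u has_real_derivative u1 x) (at x within {c..d})" if "x \<in> {c..d}" for x
  proof -
    have "(u has_real_derivative (q x * exp (P x) + (Q x - Q m) * (exp (P x) * p x))) (at x within {c..d})"
      unfolding u_def
      by (rule derivative_eq_intros refl Q P that | simp)+
    moreover have "q x * exp (P x) + (Q x - Q m) * (exp (P x) * p x) = u1 x"
      unfolding q_def u1_def u_def by (simp add: exp_minus field_simps)
    ultimately show ?thesis by simp
  qed
  have uc: "continuous_on {c..d} u" using uder by (rule DERIV_continuous_on)
  have u1c: "continuous_on {c..d} u1" unfolding u1_def
    by (intro continuous_intros uc pc hc)
  have um: "u m = 0" by (simp add: u_def)
  have u1m: "u1 m = 1 / (a * m * (2 - m))" by (simp add: u1_def um h_def)
  define \<sigma> where "\<sigma> = (if u1 m > 0 then 1 else (-1::real))"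
  have sig2: "\<sigma> * \<sigma> = 1" by (simp add: \<sigma>_def)
  have u1mnz: "u1 m \<noteq> 0" using u1m nz[of m] cd by auto
  have su1m: "\<sigma> * u1 m > 0" using u1mnz by (auto simp: \<sigma>_def)
  have u1cont: "isCont u1 m"
    using u1c cd unfolding continuous_on_eq_continuous_within
    by (metis at_within_Icc_at atLeastAtMost_iff continuous_within less_imp_le)
  have "isCont (\<lambda>w. \<sigma> * u1 w) m" by (intro continuous_intros u1cont)
  then have "((\<lambda>w. \<sigma> * u1 w) \<longlongrightarrow> \<sigma> * u1 m) (at m)" by (simp add: isCont_def)
  from order_tendstoD(1)[OF this su1m]
  obtain \<delta> where \<delta>: "\<delta> > 0" "\<And>x. x \<noteq> m \<Longrightarrow> dist x m < \<delta> \<Longrightarrow> \<sigma> * u1 x > 0"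
    unfolding eventually_at by blast
  define r' where "r' = min \<delta> (min (m - c) (d - m)) / 2"
  have r': "r' > 0" "r' < \<delta>" "r' < m - c" "r' < d - m" using \<delta> cd by (auto simp: r'_def)
  define c' where "c' = m - r'"
  define d' where "d' = m + r'"
  have inI: "c < x \<and> x < d \<and> \<sigma> * u1 x > 0" if "c' \<le> x" "x \<le> d'" for x
  proof -
    have "c < x \<and> x < d" using that r' by (auto simp: c'_def d'_def)
    moreover have "\<sigma> * u1 x > 0"
    proof (cases "x = m")
      case True then show ?thesis using su1m by simp
    next
      case False
      have "dist x m < \<delta>" using that r' by (auto simp: c'_def d'_def dist_real_def)
      then show ?thesis using \<delta>(2)[OF False] by simp
    qed
    ultimately show ?thesis by blast
  qed
  define f where "f w = \<sigma> * u w" for w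
  have fder: "(f has_real_derivative \<sigma> * u1 x) (at x)" if "c' \<le> x" "x \<le> d'" for x
  proof -
    have x: "c < x" "x < d" using inI[OF that] by auto
    have "(u has_real_derivative u1 x) (at x)"
      using uder[of x] x at_within_Icc_at[OF x] by auto
    then show ?thesis unfolding f_def by (rule DERIV_cmult)
  qed
  have fcont: "isCont f x" if "c' \<le> x" "x \<le> d'" for x
    using fder[OF that] by (rule DERIV_isCont)
  have fmono: "f x < f y" if "c' \<le> x" "x < y" "y \<le> d'" for x y
  proof (rule DERIV_pos_imp_increasing[OF \<open>x < y\<close>])
    fix z assume "x \<le> z" "z \<le> y"
    then have "c' \<le> z" "z \<le> d'" using that by auto
    then show "\<exists>D. (f has_real_derivative D) (at z) \<and> D > 0" using fder inI by blast
  qed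
  have fm: "f m = 0" by (simp add: f_def um)
  have cdm': "c' < m" "m < d'" using r' by (auto simp: c'_def d'_def)
  have fc': "f c' < 0" using fmono[of c' m] cdm' fm by auto
  have fd': "f d' > 0" using fmono[of m d'] cdm' fm by auto
  have finj: "x = y" if "c' \<le> x" "x \<le> d'" "c' \<le> y" "y \<le> d'" "f x = f y" for x y
    using fmono[of x y] fmono[of y x] that by (cases x y rule: linorder_cases) auto
  define g where "g t = (THE w. c' \<le> w \<and> w \<le> d' \<and> f w = t)" for t
  have gprop: "c' \<le> g t \<and> g t \<le> d' \<and> f (g t) = t" if tt: "f c' \<le> t" "t \<le> f d'" for t
  proof -
    obtain w where w: "c' \<le> w" "w \<le> d'" "f w = t"
      using IVT[of f c' t d'] tt cdm' fcont by force
    have "c' \<le> g t \<and> g t \<le> d' \<and> f (g t) = t" unfolding g_def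
      by (rule theI[of _ w]) (use w finj in auto)
    then show ?thesis .
  qed
  have gf: "g (f z) = z" if "c' \<le> z" "z \<le> d'" for z
  proof -
    have "f c' \<le> f z" "f z \<le> f d'" using fmono that by (auto simp: le_less)
    from gprop[OF this] show ?thesis using finj that by blast
  qed
  have gder: "(g has_real_derivative inverse (\<sigma> * u1 (g t))) (at t)" if t: "f c' < t" "t < f d'" for t
  proof -
    have gt: "c' \<le> g t" "g t \<le> d'" "f (g t) = t" using gprop[of t] t by auto
    have gt': "c' < g t" "g t < d'" using gt t by (auto simp: le_less)
    have ic: "isCont g t"
      using isCont_inverse_function2[of c' "g t" d' g f] gt' gf fcont gt(3) by auto
    show ?thesis
    proof (rule DERIV_inverse_function[where a="f c'" and b="f d'"])
      show "(f has_real_derivative \<sigma> * u1 (g t)) (at (g t))" using fder gt by blast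
      show "\<sigma> * u1 (g t) \<noteq> 0" using inI gt by force
      show "f c' < t" "t < f d'" by (rule t)+
      show "isCont g t" by (rule ic)
      fix y assume "f c' < y" "y < f d'"
      then show "f (g y) = y" using gprop[of y] by simp
    qed
  qed
  define \<rho> where "\<rho> = min 1 (min (- f c') (f d'))"
  have \<rho>: "\<rho> > 0" using fc' fd' by (auto simp: \<rho>_def)
  define V where "V s = g (\<sigma> * s^2)" for s
  have V0: "V 0 = m" using gf[of m] cdm' fm by (simp add: V_def)
  have "(V has_real_derivative Ff a s (V s)) (at s) \<and> Dd a s (V s) \<noteq> 0" if s: "\<bar>s\<bar> < \<rho>" for s
  proof -
    have s2: "s^2 < \<rho>"
    proof -
      have "s^2 = \<bar>s\<bar> * \<bar>s\<bar>" by (simp add: power2_eq_square)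
      also have "\<dots> \<le> \<bar>s\<bar>" using s by (intro mult_left_le) (auto simp: \<rho>_def)
      finally show ?thesis using s by simp
    qed
    have t: "f c' < \<sigma> * s^2" "\<sigma> * s^2 < f d'"
    proof -
      have z: "0 \<le> s^2" by simp
      have "s^2 < - f c'" "s^2 < f d'" using s2 by (auto simp: \<rho>_def)
      moreover have "f c' < s^2" "- (s^2) < f d'" using fc' fd' z by linarith+
      ultimately show "f c' < \<sigma> * s^2" "\<sigma> * s^2 < f d'" by (auto simp: \<sigma>_def)
    qed
    have Vs: "c' \<le> V s" "V s \<le> d'" "f (V s) = \<sigma> * s^2" using gprop[of "\<sigma> * s^2"] t by (auto simp: V_def)
    have uV: "u (V s) = s^2" using Vs(3) sig2 unfolding f_def
      by (metis mult.assoc mult_1)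
    have der: "(V has_real_derivative inverse (\<sigma> * u1 (V s)) * (\<sigma> * (2 * s))) (at s)"
    proof -
      have d2: "((\<lambda>s. \<sigma> * s^2) has_real_derivative \<sigma> * (2 * s)) (at s)"
        by (auto intro!: derivative_eq_intros)
      show ?thesis unfolding V_def
        using DERIV_chain2[where f=g and g="\<lambda>s. \<sigma> * s^2", OF gder[OF t] d2] by simp
    qed
    have pos: "\<sigma> * u1 (V s) > 0" using inI Vs by auto
    have nzV: "a * V s * (2 - V s) \<noteq> 0"
    proof (rule nz)
      show "V s \<in> {c..d}" using inI[OF Vs(1,2)] by auto
    qed
    have u1V: "u1 (V s) = (1 + (6 - 2*a - 2 * V s) * s^2) / (a * V s * (2 - V s))"
      unfolding u1_def h_def p_def uV using nzV by (simp add: field_simps)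
    have num: "1 + (6 - 2*a - 2 * V s) * s^2 \<noteq> 0" using pos u1V by auto
    have DdV: "Dd a s (V s) = (1 + (6 - 2*a - 2 * V s) * s^2) / 2"
      by (simp add: Dd_def field_simps)
    have "inverse (\<sigma> * u1 (V s)) * (\<sigma> * (2 * s)) = 2 * s / u1 (V s)"
      using sig2 pos by (auto simp: \<sigma>_def field_simps split: if_splits)
    also have "\<dots> = Ff a s (V s)"
      unfolding u1V Ff_def DdV using nzV num by (simp add: field_simps)
    finally show ?thesis using der DdV num by auto
  qed
  then show ?thesis using \<rho> V0 by blast
qed


lemma opL_eq: "opL N V V1 s = V1 s * Dd (real N - 2) s (V s) - (real N - 2) * s * V s * (2 - V s)"
  unfolding opL_def Dd_def by (simp add: algebra_simps power2_eq_square)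

definition V2f :: "real \<Rightarrow> (real \<Rightarrow> real) \<Rightarrow> real \<Rightarrow> real" where
  "V2f a V s = ((a * (V s * (2 - V s)) + a * s * (2 - 2 * V s) * Ff a s (V s)) * Dd a s (V s)
     - (a * s * V s * (2 - V s)) * (2 * (3 - a) * s - Ff a s (V s) * s^2 - 2 * V s * s)) / (Dd a s (V s))^2"

lemma V1_deriv:
  assumes dV: "(V has_real_derivative Ff a s (V s)) (at s)" and D: "Dd a s (V s) \<noteq> 0"
  shows "((\<lambda>s. Ff a s (V s)) has_real_derivative V2f a V s) (at s)"
proof -
  have "((\<lambda>s. a * s * V s * (2 - V s) / (1/2 + (3 - a) * s^2 - V s * s^2)) has_real_derivative V2f a V s) (at s)"
    using D unfolding V2f_def
    apply (unfold Dd_def)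
    apply (rule derivative_eq_intros dV refl | simp)+
    apply (rule arg_cong2[where f="(/)"])
    apply (simp add: algebra_simps)
    apply (simp add: power2_eq_square)
    done
  then show ?thesis unfolding Ff_def Dd_def .
qed
lemma cont_pos_near:
  fixes f :: "real \<Rightarrow> real"
  assumes "isCont f 0" "c < f 0"
  shows "\<exists>\<delta>>0. \<forall>s. \<bar>s\<bar> < \<delta> \<longrightarrow> c < f s"
proof -
  have "(f \<longlongrightarrow> f 0) (at 0)" using assms(1) by (simp add: isCont_def)
  from order_tendstoD(1)[OF this assms(2)]
  obtain \<delta> where "\<delta> > 0" "\<And>x. x \<noteq> 0 \<Longrightarrow> dist x 0 < \<delta> \<Longrightarrow> c < f x"
    unfolding eventually_at by blast
  then show ?thesis using assms(2) by (metis dist_real_def diff_zero)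
qed

lemma exist_all:
  fixes a m :: real
  assumes a: "a > 0" and m: "m > 0"
  shows "\<exists>\<rho>>0. \<exists>V. V 0 = m \<and> (\<forall>s. \<bar>s\<bar> < \<rho> \<longrightarrow>
            (V has_real_derivative Ff a s (V s)) (at s) \<and> Dd a s (V s) \<noteq> 0)"
proof (cases "m = 2")
  case False then show ?thesis using exist_ne2[OF a m False] by blast
next
  case True
  define \<rho> where "\<rho> = min 1 (1 / (2 * a))"
  have \<rho>: "\<rho> > 0" using a by (simp add: \<rho>_def)
  have "((\<lambda>_. 2) has_real_derivative Ff a s 2) (at s) \<and> Dd a s 2 \<noteq> 0" if s: "\<bar>s\<bar> < \<rho>" for s
  proof -
    have s2: "s^2 \<le> \<bar>s\<bar>"
    proof -
      have "s^2 = \<bar>s\<bar> * \<bar>s\<bar>" by (simp add: power2_eq_square)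
      also have "\<dots> \<le> \<bar>s\<bar>" using s by (intro mult_left_le) (auto simp: \<rho>_def)
      finally show ?thesis .
    qed
    have "\<bar>s\<bar> < 1 / (2 * a)" using s by (simp add: \<rho>_def)
    then have "a * \<bar>s\<bar> < a * (1 / (2 * a))" using a by (intro mult_strict_left_mono) auto
    also have "\<dots> = 1/2" using a by simp
    finally have "a * s^2 < 1/2" using s2 a mult_left_mono[OF s2, of a] by linarith
    moreover have "0 \<le> s^2" by simp
    moreover have "Dd a s 2 = 1/2 + s^2 - a * s^2" by (simp add: Dd_def algebra_simps)
    ultimately have "Dd a s 2 > 0" by linarith
    moreover have "Ff a s 2 = 0" by (simp add: Ff_def)
    ultimately show ?thesis by simp
  qed
  then show ?thesis using \<rho> True by (intro exI[of _ \<rho>] conjI exI[of _ "\<lambda>_. 2"]) auto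
qed

lemma assemble:
  fixes a m \<rho> :: real
  assumes a: "a > 0" and m: "m > 0" and \<rho>: "\<rho> > 0" and V0: "V 0 = m"
    and hV: "\<And>s. \<bar>s\<bar> < \<rho> \<Longrightarrow> (V has_real_derivative Ff a s (V s)) (at s) \<and> Dd a s (V s) \<noteq> 0"
  shows "\<exists>L>0. \<forall>s\<in>{0..L}. \<bar>s\<bar> < \<rho> \<and> Dd a s (V s) > 0 \<and> (2 - m) * V2f a V s \<ge> a * m * (2 - m)^2"
proof -
  have hV0: "(V has_real_derivative Ff a 0 (V 0)) (at 0)" "Dd a 0 (V 0) \<noteq> 0" using hV \<rho> by auto
  have cV: "isCont V 0" using hV0(1) by (rule DERIV_isCont)
  have cD: "isCont (\<lambda>s. Dd a s (V s)) 0" unfolding Dd_def by (intro continuous_intros cV)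
  have D0: "Dd a 0 (V 0) = 1/2" by (simp add: Dd_def)
  obtain \<delta>1 where \<delta>1: "\<delta>1 > 0" "\<And>s. \<bar>s\<bar> < \<delta>1 \<Longrightarrow> 0 < Dd a s (V s)"
    using cont_pos_near[OF cD, of 0] D0 by auto
  obtain \<delta>2 where \<delta>2: "\<delta>2 > 0" "\<And>s. \<bar>s\<bar> < \<delta>2 \<Longrightarrow> (2 - m) * V2f a V s \<ge> a * m * (2 - m)^2"
  proof (cases "m = 2")
    case True then show ?thesis using that[of 1] by simp
  next
    case False
    have cF: "isCont (\<lambda>s. Ff a s (V s)) 0" using V1_deriv[OF hV0] by (rule DERIV_isCont)
    have c2: "isCont (\<lambda>s. (2 - m) * V2f a V s) 0" unfolding V2f_def
      by (intro continuous_intros cV cF cD) (use hV0 in simp)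
    have val: "(2 - m) * V2f a V 0 = 2 * (a * m * (2 - m)^2)"
    proof -
      have D0': "Dd a 0 m = 1/2" using D0 V0 by simp
      show ?thesis using V0 by (simp add: V2f_def Ff_def D0' power2_eq_square)
    qed
    have "a * m * (2 - m)^2 > 0" using a m False by simp
    then have "a * m * (2 - m)^2 < (2 - m) * V2f a V 0" using val by simp
    from cont_pos_near[OF c2 this] obtain \<delta> where "\<delta> > 0" "\<forall>s. \<bar>s\<bar> < \<delta> \<longrightarrow> a * m * (2 - m)\<^sup>2 < (2 - m) * V2f a V s"
      by blast
    then show ?thesis using that[of \<delta>] less_imp_le by blast
  qed
  define L where "L = min \<rho> (min \<delta>1 \<delta>2) / 2"
  have L: "L > 0" "L < \<rho>" "L < \<delta>1" "L < \<delta>2" using \<rho> \<delta>1 \<delta>2 by (auto simp: L_def)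
  show ?thesis
  proof (intro exI[of _ L] conjI ballI)
    fix s assume s: "s \<in> {0..L}"
    then have "\<bar>s\<bar> < \<rho>" "\<bar>s\<bar> < \<delta>1" "\<bar>s\<bar> < \<delta>2" using L by auto
    then show "\<bar>s\<bar> < \<rho>" "0 < Dd a s (V s)" "(2 - m) * V2f a V s \<ge> a * m * (2 - m)^2"
      using \<delta>1 \<delta>2 by auto
  qed (rule L)
qed



definition Kc :: "real \<Rightarrow> real \<Rightarrow> real \<Rightarrow> real \<Rightarrow> real" where
  "Kc a L M e = a * L * ((1/2 + \<bar>3 - a\<bar> * L^2) * (2 + 2 * M) + L^2 * M^2) / e^2"

lemma Kc_nonneg: "a \<ge> 0 \<Longrightarrow> L \<ge> 0 \<Longrightarrow> M \<ge> 0 \<Longrightarrow> Kc a L M e \<ge> 0"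
  unfolding Kc_def by (intro divide_nonneg_nonneg mult_nonneg_nonneg add_nonneg_nonneg) auto

lemma lip:
  fixes a s L x y M e :: real
  assumes a: "a \<ge> 0" and s: "0 \<le> s" "s \<le> L" and x: "\<bar>x\<bar> \<le> M" and y: "\<bar>y\<bar> \<le> M"
    and e: "e > 0" and Dx: "Dd a s x \<ge> e" and Dy: "Dd a s y \<ge> e"
  shows "\<bar>Ff a s x - Ff a s y\<bar> \<le> Kc a L M e * \<bar>x - y\<bar>"
proof -
  define b where "b = 1/2 + (3 - a) * s^2"
  define G where "G = b * (2 - x - y) + s^2 * x * y"
  define Gm where "Gm = (1/2 + \<bar>3 - a\<bar> * L^2) * (2 + 2 * M) + L^2 * M^2"
  have Dxp: "Dd a s x > 0" and Dyp: "Dd a s y > 0" using Dx Dy e by auto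
  have Dxe: "Dd a s x = b - x * s^2" and Dye: "Dd a s y = b - y * s^2" by (simp_all add: Dd_def b_def)
  have eq: "Ff a s x - Ff a s y = (a * s * G) * (x - y) / (Dd a s x * Dd a s y)"
    using Dxp Dyp unfolding Ff_def G_def Dxe Dye
    by (simp add: field_simps)
  have M0: "M \<ge> 0" using x by auto
  have sL2: "s^2 \<le> L^2" using s by (intro power_mono) auto
  have bb: "\<bar>b\<bar> \<le> 1/2 + \<bar>3 - a\<bar> * L^2"
  proof -
    have "\<bar>b\<bar> \<le> 1/2 + \<bar>3 - a\<bar> * s^2" unfolding b_def by (simp add: abs_mult abs_triangle_ineq[THEN order_trans])
    also have "\<dots> \<le> 1/2 + \<bar>3 - a\<bar> * L^2" using sL2 by (simp add: mult_left_mono)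
    finally show ?thesis .
  qed
  have t2: "\<bar>2 - x - y\<bar> \<le> 2 + 2 * M" using x y by linarith
  have Gb: "\<bar>G\<bar> \<le> Gm"
  proof -
    have "\<bar>G\<bar> \<le> \<bar>b\<bar> * \<bar>2 - x - y\<bar> + s^2 * (\<bar>x\<bar> * \<bar>y\<bar>)"
      unfolding G_def by (simp add: abs_mult abs_triangle_ineq[THEN order_trans] mult.assoc)
    also have "\<dots> \<le> (1/2 + \<bar>3 - a\<bar> * L^2) * (2 + 2 * M) + L^2 * (M * M)"
      by (intro add_mono mult_mono sL2 bb t2 x y) (auto simp: M0)
    finally show ?thesis by (simp add: Gm_def power2_eq_square)
  qed
  have asG: "\<bar>a * s * G\<bar> \<le> a * L * Gm"
    using a s Gb by (simp add: abs_mult) (intro mult_mono, auto)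
  have DD: "e^2 \<le> Dd a s x * Dd a s y"
    unfolding power2_eq_square using e Dx Dy by (intro mult_mono) auto
  have "\<bar>Ff a s x - Ff a s y\<bar> = \<bar>a * s * G\<bar> * \<bar>x - y\<bar> / (Dd a s x * Dd a s y)"
    using Dxp Dyp unfolding eq by (simp add: abs_mult)
  also have "\<dots> \<le> (a * L * Gm) * \<bar>x - y\<bar> / (Dd a s x * Dd a s y)"
    using Dxp Dyp asG by (intro divide_right_mono mult_right_mono) auto
  also have "\<dots> \<le> (a * L * Gm) * \<bar>x - y\<bar> / e^2"
    using e DD a s Gb Dxp Dyp by (intro divide_left_mono mult_nonneg_nonneg) auto
  also have "\<dots> = Kc a L M e * \<bar>x - y\<bar>" by (simp add: Kc_def Gm_def)
  finally show ?thesis .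
qed

lemma local_uniq:
  fixes a L T :: real and V V1 W W1 :: "real \<Rightarrow> real"
  assumes a: "a > 0"
    and dV: "\<And>s. s \<in> {0..L} \<Longrightarrow> (V has_real_derivative V1 s) (at s within {0..L})"
    and dW: "\<And>s. s \<in> {0..L} \<Longrightarrow> (W has_real_derivative W1 s) (at s within {0..L})"
    and eV: "\<And>s. s \<in> {0<..L} \<Longrightarrow> V1 s * Dd a s (V s) = a * s * V s * (2 - V s)"
    and eW: "\<And>s. s \<in> {0<..L} \<Longrightarrow> W1 s * Dd a s (W s) = a * s * W s * (2 - W s)"
    and T: "T \<in> {0..L}" and WT: "W T = V T" and DT: "Dd a T (V T) > 0"
  shows "\<exists>\<eta>>0. \<forall>s\<in>{0..L}. T \<le> s \<and> s \<le> T + \<eta> \<longrightarrow> W s = V s"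
proof -
  have cV: "continuous_on {0..L} V" using dV by (rule DERIV_continuous_on)
  have cW: "continuous_on {0..L} W" using dW by (rule DERIV_continuous_on)
  define D0 where "D0 = Dd a T (V T)"
  define M where "M = \<bar>V T\<bar> + 1"
  let ?F = "at T within {0..L}"
  have tV: "(V \<longlongrightarrow> V T) ?F" using cV T by (simp add: continuous_on_eq_continuous_within continuous_within)
  have tW: "(W \<longlongrightarrow> W T) ?F" using cW T by (simp add: continuous_on_eq_continuous_within continuous_within)
  have tDV: "((\<lambda>s. Dd a s (V s)) \<longlongrightarrow> D0) ?F" unfolding D0_def Dd_def
    by (intro tendsto_intros tV)
  have tDW: "((\<lambda>s. Dd a s (W s)) \<longlongrightarrow> D0) ?F" unfolding D0_def Dd_def WT[symmetric]
    by (intro tendsto_intros tW)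
  have tAV: "((\<lambda>s. \<bar>V s\<bar>) \<longlongrightarrow> \<bar>V T\<bar>) ?F" by (intro tendsto_intros tV)
  have tAW: "((\<lambda>s. \<bar>W s\<bar>) \<longlongrightarrow> \<bar>V T\<bar>) ?F" unfolding WT[symmetric] by (intro tendsto_intros tW)
  have D0p: "D0 > 0" using DT by (simp add: D0_def)
  have ev: "eventually (\<lambda>s. D0/2 < Dd a s (V s) \<and> D0/2 < Dd a s (W s) \<and> \<bar>V s\<bar> < M \<and> \<bar>W s\<bar> < M) ?F"
    using order_tendstoD(1)[OF tDV, of "D0/2"] order_tendstoD(1)[OF tDW, of "D0/2"]
      order_tendstoD(2)[OF tAV, of M] order_tendstoD(2)[OF tAW, of M] D0p
    by (simp add: M_def) (intro eventually_conj; assumption)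
  then obtain d where d: "d > 0" and
    dP: "\<And>x. x \<in> {0..L} \<Longrightarrow> x \<noteq> T \<Longrightarrow> dist x T < d \<Longrightarrow>
        D0/2 < Dd a x (V x) \<and> D0/2 < Dd a x (W x) \<and> \<bar>V x\<bar> < M \<and> \<bar>W x\<bar> < M"
    unfolding eventually_at by blast
  have P: "D0/2 < Dd a x (V x) \<and> D0/2 < Dd a x (W x) \<and> \<bar>V x\<bar> < M \<and> \<bar>W x\<bar> < M"
    if "x \<in> {0..L}" "\<bar>x - T\<bar> < d" for x
  proof (cases "x = T")
    case True then show ?thesis using D0p WT by (simp add: D0_def M_def)
  next
    case False then show ?thesis using dP[OF that(1) False] that(2) by (simp add: dist_real_def)
  qed
  have L0: "L \<ge> 0" using T by auto
  have M0: "M \<ge> 0" by (simp add: M_def)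
  define K where "K = Kc a L M (D0/2)"
  have K0: "K \<ge> 0" unfolding K_def using a L0 M0 by (intro Kc_nonneg) auto
  define \<eta> where "\<eta> = min (d/2) (1 / (2 * K + 2))"
  have \<eta>: "\<eta> > 0" "\<eta> < d" using d K0 by (auto simp: \<eta>_def)
  have \<eta>K: "K * \<eta> \<le> 1/2"
  proof -
    have "K * \<eta> \<le> K * (1 / (2 * K + 2))" using K0 by (intro mult_left_mono) (auto simp: \<eta>_def)
    also have "\<dots> \<le> 1/2" using K0 by (simp add: field_simps)
    finally show ?thesis .
  qed
  define R where "R = min (T + \<eta>) L"
  define I where "I = {T..R}"
  have TR: "T \<le> R" using T \<eta> by (auto simp: R_def)
  have IinL: "x \<in> {0..L}" "\<bar>x - T\<bar> < d" if "x \<in> I" for x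
    using that T \<eta> by (auto simp: I_def R_def)
  have cE: "continuous_on I (\<lambda>x. \<bar>W x - V x\<bar>)"
    by (intro continuous_intros continuous_on_subset[OF cV] continuous_on_subset[OF cW])
       (use IinL in auto)
  obtain s0 where s0: "s0 \<in> I" "\<And>y. y \<in> I \<Longrightarrow> \<bar>W y - V y\<bar> \<le> \<bar>W s0 - V s0\<bar>"
    using continuous_attains_sup[OF _ _ cE] TR by (auto simp: I_def)
  define E where "E = \<bar>W s0 - V s0\<bar>"
  have E0: "E \<ge> 0" by (simp add: E_def)
  have bound: "\<bar>W s - V s\<bar> \<le> K * \<eta> * E" if s: "s \<in> I" for s
  proof (cases "s = T")
    case True then show ?thesis using WT K0 \<eta> E0 by simp
  next
    case False
    then have Ts: "T < s" using s by (auto simp: I_def)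
    have sub: "{T..s} \<subseteq> {0..L}" using s T by (auto simp: I_def R_def)
    have "\<exists>x\<in>{T<..<s}. (W s - V s) - (W T - V T) = (\<lambda>h. (W1 x - V1 x) * h) (s - T)"
    proof (rule mvt_simple[OF Ts])
      fix x assume x: "T \<le> x" "x \<le> s"
      then have xL: "x \<in> {0..L}" using sub by auto
      have "((\<lambda>x. W x - V x) has_real_derivative W1 x - V1 x) (at x within {T..s})"
        by (intro DERIV_diff has_field_derivative_subset[OF dW[OF xL] sub]
            has_field_derivative_subset[OF dV[OF xL] sub])
      then show "((\<lambda>x. W x - V x) has_derivative (\<lambda>h. (W1 x - V1 x) * h)) (at x within {T..s})"
        by (simp add: has_field_derivative_def)
    qed
    then obtain x where x: "T < x" "x < s" and mv: "W s - V s = (W1 x - V1 x) * (s - T)"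
      using WT by auto
    have xI: "x \<in> I" using x s by (auto simp: I_def)
    have xL: "x \<in> {0<..L}" using IinL[OF xI] x T by auto
    have Px: "D0/2 < Dd a x (V x)" "D0/2 < Dd a x (W x)" "\<bar>V x\<bar> < M" "\<bar>W x\<bar> < M"
      using P IinL[OF xI] by auto
    have W1x: "W1 x = Ff a x (W x)" using eW[OF xL] Px D0p unfolding Ff_def
      by (simp add: field_simps)
    have V1x: "V1 x = Ff a x (V x)" using eV[OF xL] Px D0p unfolding Ff_def
      by (simp add: field_simps)
    have "\<bar>W1 x - V1 x\<bar> \<le> K * \<bar>W x - V x\<bar>" unfolding W1x V1x K_def
      by (rule lip) (use a xL Px D0p in auto)
    also have "\<dots> \<le> K * E" using s0(2)[OF xI] K0 by (simp add: E_def mult_left_mono)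
    finally have d1: "\<bar>W1 x - V1 x\<bar> \<le> K * E" .
    have sT: "s - T \<le> \<eta>" "0 \<le> s - T" using s Ts by (auto simp: I_def R_def)
    have "\<bar>W s - V s\<bar> = \<bar>W1 x - V1 x\<bar> * (s - T)" using mv sT by (simp add: abs_mult)
    also have "\<dots> \<le> (K * E) * \<eta>" using d1 sT K0 E0 by (intro mult_mono) auto
    finally show ?thesis by (simp add: algebra_simps)
  qed
  have "E \<le> K * \<eta> * E" using bound[OF s0(1)] by (simp add: E_def)
  also have "\<dots> \<le> 1/2 * E" using \<eta>K E0 by (intro mult_right_mono) auto
  finally have "E = 0" using E0 by simp
  then have zero: "W s = V s" if "s \<in> I" for s using s0(2)[OF that] by (simp add: E_def)
  show ?thesis
  proof (intro exI[of _ \<eta>] conjI ballI impI)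
    fix s assume "s \<in> {0..L}" "T \<le> s \<and> s \<le> T + \<eta>"
    then have "s \<in> I" by (auto simp: I_def R_def)
    then show "W s = V s" by (rule zero)
  qed (rule \<eta>(1))
qed

lemma global_uniq:
  fixes a L :: real and V V1 W W1 :: "real \<Rightarrow> real"
  assumes a: "a > 0"
    and dV: "\<And>s. s \<in> {0..L} \<Longrightarrow> (V has_real_derivative V1 s) (at s within {0..L})"
    and dW: "\<And>s. s \<in> {0..L} \<Longrightarrow> (W has_real_derivative W1 s) (at s within {0..L})"
    and eV: "\<And>s. s \<in> {0<..L} \<Longrightarrow> V1 s * Dd a s (V s) = a * s * V s * (2 - V s)"
    and eW: "\<And>s. s \<in> {0<..L} \<Longrightarrow> W1 s * Dd a s (W s) = a * s * W s * (2 - W s)"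
    and W0: "W 0 = V 0" and DV: "\<And>s. s \<in> {0..L} \<Longrightarrow> Dd a s (V s) > 0"
  shows "\<forall>s\<in>{0..L}. W s = V s"
proof (rule ccontr)
  assume nt: "\<not> (\<forall>s\<in>{0..L}. W s = V s)"
  define B where "B = {s\<in>{0..L}. W s \<noteq> V s}"
  have Bne: "B \<noteq> {}" using nt by (auto simp: B_def)
  have Bbd: "bdd_below B" unfolding B_def by (rule bdd_belowI[of _ 0]) auto
  define T where "T = Inf B"
  have Tle: "T \<le> b" if "b \<in> B" for b using cInf_lower[OF that Bbd] by (simp add: T_def)
  have T0: "T \<ge> 0" unfolding T_def by (rule cInf_greatest[OF Bne]) (auto simp: B_def)
  obtain b0 where b0: "b0 \<in> B" using Bne by blast
  have TL: "T \<le> L" using Tle[OF b0] b0 by (auto simp: B_def)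
  have below: "W s = V s" if "0 \<le> s" "s < T" for s
    using Tle[of s] that TL by (force simp: B_def)
  have WT: "W T = V T"
  proof (rule ccontr)
    assume ne: "W T \<noteq> V T"
    then have Tp: "T > 0" using T0 W0 by (cases "T = 0") auto
    have cV: "continuous_on {0..L} V" using dV by (rule DERIV_continuous_on)
    have cW: "continuous_on {0..L} W" using dW by (rule DERIV_continuous_on)
    have "((\<lambda>s. W s - V s) \<longlongrightarrow> W T - V T) (at T within {0..L})"
      using cV cW T0 TL by (intro tendsto_intros) (auto simp: continuous_on_eq_continuous_within continuous_within)
    from tendsto_imp_eventually_ne[OF this, of 0] ne
    obtain d where d: "d > 0" "\<And>x. x \<in> {0..L} \<Longrightarrow> x \<noteq> T \<Longrightarrow> dist x T < d \<Longrightarrow> W x - V x \<noteq> 0"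
      unfolding eventually_at by auto
    define x where "x = T - min T d / 2"
    have "x \<in> {0..L}" "x \<noteq> T" "dist x T < d" "0 \<le> x" "x < T"
      using d Tp TL by (auto simp: x_def dist_real_def)
    then show False using d(2) below by auto
  qed
  obtain \<eta> where \<eta>: "\<eta> > 0" "\<And>s. s \<in> {0..L} \<Longrightarrow> T \<le> s \<and> s \<le> T + \<eta> \<Longrightarrow> W s = V s"
    using local_uniq[OF a dV dW eV eW _ WT DV] T0 TL by auto
  have "T + \<eta> \<le> T" 
  proof -
    have "T + \<eta> \<le> Inf B"
    proof (rule cInf_greatest[OF Bne])
      fix b assume b: "b \<in> B"
      show "T + \<eta> \<le> b" using \<eta>(2)[of b] b Tle[OF b] by (force simp: B_def)
    qed
    then show ?thesis by (simp add: T_def)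
  qed
  then show False using \<eta> by simp
qed

lemma V2_isCont:
  assumes dV: "(V has_real_derivative Ff a s (V s)) (at s)" and D: "Dd a s (V s) \<noteq> 0"
  shows "isCont (V2f a V) s"
proof -
  have cV: "isCont V s" using dV by (rule DERIV_isCont)
  have cF: "isCont (\<lambda>s. Ff a s (V s)) s" using V1_deriv[OF dV D] by (rule DERIV_isCont)
  have cD: "isCont (\<lambda>s. Dd a s (V s)) s" unfolding Dd_def by (intro continuous_intros cV)
  have "isCont (\<lambda>t. 1 * V2f a V t) s" unfolding V2f_def
    by (intro continuous_intros cV cF cD) (use D in simp)
  then show ?thesis by simp
qed

theorem lemma3p1:
  fixes N :: nat
  assumes "N \<ge> 3"
  shows "\<forall>m::real. m > 0 \<longrightarrow> (\<exists>L>0. \<exists>V V1 V2.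
           is_sol N m L V V1 V2
         \<and> (\<forall>W W1 W2. is_sol N m L W W1 W2 \<longrightarrow> (\<forall>s\<in>{0..L}. W s = V s))
         \<and> V1 0 = 0
         \<and> (\<forall>s\<in>{0..L}. (2 - m) * V2 s \<ge> (real N - 2) * m * (2 - m)^2))"
proof (intro allI impI)
  fix m :: real assume m: "m > 0"
  define a where "a = real N - 2"
  have a: "a > 0" using assms by (simp add: a_def)
  obtain \<rho> V where \<rho>: "\<rho> > 0" and V0: "V 0 = m" and
    hV: "\<And>s. \<bar>s\<bar> < \<rho> \<Longrightarrow> (V has_real_derivative Ff a s (V s)) (at s) \<and> Dd a s (V s) \<noteq> 0"
    using exist_all[OF a m] by blast
  obtain L where L: "L > 0" and
    hL: "\<And>s. s \<in> {0..L} \<Longrightarrow> \<bar>s\<bar> < \<rho> \<and> Dd a s (V s) > 0 \<and> (2 - m) * V2f a V s \<ge> a * m * (2 - m)^2"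
    using assemble[OF a m \<rho> V0 hV] by blast
  define V1 where "V1 s = Ff a s (V s)" for s
  define V2 where "V2 = V2f a V"
  have dV: "(V has_real_derivative V1 s) (at s within {0..L})" if "s \<in> {0..L}" for s
    using hV[of s] hL[OF that] unfolding V1_def by (auto intro: has_field_derivative_at_within)
  have dV1: "(V1 has_real_derivative V2 s) (at s within {0..L})" if "s \<in> {0..L}" for s
  proof -
    have "(V1 has_real_derivative V2 s) (at s)"
      using V1_deriv[of V a s] hV[of s] hL[OF that] unfolding V1_def[abs_def] V2_def by auto
    then show ?thesis by (rule has_field_derivative_at_within)
  qed
  have cV2: "continuous_on {0..L} V2" unfolding V2_def
    by (intro continuous_at_imp_continuous_on ballI V2_isCont) (use hV hL in auto)
  have eV: "V1 s * Dd a s (V s) = a * s * V s * (2 - V s)" if "s \<in> {0..L}" for s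
    using hL[OF that] unfolding V1_def Ff_def by simp
  have sol: "is_sol N m L V V1 V2"
    unfolding is_sol_def C2_on_def
    using dV dV1 cV2 V0 eV by (auto simp: opL_eq a_def[symmetric])
  have uniq: "\<forall>s\<in>{0..L}. W s = V s" if W: "is_sol N m L W W1 W2" for W W1 W2
  proof (rule global_uniq[OF a])
    show "\<And>s. s \<in> {0..L} \<Longrightarrow> (V has_real_derivative V1 s) (at s within {0..L})" by (rule dV)
    show "\<And>s. s \<in> {0..L} \<Longrightarrow> (W has_real_derivative W1 s) (at s within {0..L})"
      using W by (auto simp: is_sol_def C2_on_def)
    show "\<And>s. s \<in> {0<..L} \<Longrightarrow> V1 s * Dd a s (V s) = a * s * V s * (2 - V s)"
      using eV by auto
    show "\<And>s. s \<in> {0<..L} \<Longrightarrow> W1 s * Dd a s (W s) = a * s * W s * (2 - W s)"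
      using W by (auto simp: is_sol_def opL_eq a_def[symmetric])
    show "W 0 = V 0" using W V0 by (simp add: is_sol_def)
    show "\<And>s. s \<in> {0..L} \<Longrightarrow> Dd a s (V s) > 0" using hL by blast
  qed
  have "V1 0 = 0" by (simp add: V1_def Ff_def)
  moreover have "\<forall>s\<in>{0..L}. (2 - m) * V2 s \<ge> (real N - 2) * m * (2 - m)^2"
    using hL by (simp add: V2_def a_def)
  ultimately show "\<exists>L>0. \<exists>V V1 V2. is_sol N m L V V1 V2
         \<and> (\<forall>W W1 W2. is_sol N m L W W1 W2 \<longrightarrow> (\<forall>s\<in>{0..L}. W s = V s))
         \<and> V1 0 = 0
         \<and> (\<forall>s\<in>{0..L}. (2 - m) * V2 s \<ge> (real N - 2) * m * (2 - m)^2)"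
    using L sol uniq by blast
qed


end
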